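(* Let $m,n,k$ be positive integers with $(m,k-1)=1$ and $n=\mathrm{ind}_m(k)$, let $G=G(m,n,k)=\langle a,b;\ a^m=1,\ b^n=1,\ b^{-1}ab=a^k\rangle$, and let $S\subseteq\mathbb{Z}_m$ be a base. Then \[ \Sigma_G(S)=\dot{\bigcup_{x\in S^*}}\Big(\bigcup_{y\in Y(x)} C(x,y)\Big), \] and the union over $x\in S^*$ is disjoint.
   Context: $\mathrm{ind}_m(k)$ is the least positive integer $d$ with $k^d\equiv 1\pmod m$. Every element of $G$ is written uniquely as $a^ib^j$ with $i\in\mathbb{Z}_m$, $j\in\mathbb{Z}_n$. For $t\ge 0$ let $k_t=k^t-1 \pmod m$. Maps are written on the right of their arguments, and the composition $\mu\circ\nu$ means "first $\mu$, then $\nu$". For $x,y\in\mathbb{Z}_m$ the mu-map $\mu(x,y):G\to G$ is defined by $(a^ib^j)\mu(x,y)=a^{N}$ with $N=xik^j-yk_j \pmod m$. The container is $C(x,y)=\{\mu(x,yz): z\in\mathbb{Z}_m\}$. For $S\subseteq\mathbb{Z}_m$, $I(S)$ denotes the elements of $S$ invertible in $\mathbb{Z}_m$, and $S^*$ is the multiplicative subsemigroup of $\mathbb{Z}_m$ generated by $S$. A base is a subset $S\subseteq\mathbb{Z}_m$ with $0\in S$ and $I(S)\neq\varnothing$. For a base $S$, $\Sigma_G(S)$ is the semigroup (under composition) of maps $G\to G$ generated by $\{\mu(s,z): s\in S,\ z\in\mathbb{Z}_m\}$. For $x\in S^*$, $Y(x)=\{s^*z:\ s^*\in S^*,\ z\in\mathbb{Z}_m,\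 \text{and there exists } s\in S \text{ with } x\equiv ss^*\pmod m\}$. *)

theory Defs
  imports "HOL-Number_Theory.Number_Theory" "HOL-Library.FuncSet" "HOL-Library.Disjoint_Sets"
begin

text \<open>Z_m is represented by the integers {0..<m}; the element a^i b^j of
  G(m,n,k) is represented by the pair (i,j) with i < m, j < n.\<close>

definition Zm :: "nat \<Rightarrow> int set" where
  "Zm m = {0..<int m}"

definition Gcar :: "nat \<Rightarrow> nat \<Rightarrow> (nat \<times> nat) set" where
  "Gcar m n = {0..<m} \<times> {0..<n}"

definition mu :: "nat \<Rightarrow> nat \<Rightarrow> nat \<Rightarrow> int \<Rightarrow> int \<Rightarrow> (nat \<times> nat \<Rightarrow> nat \<times> nat)" where
  "mu m n k x y = (\<lambda>(i,j) \<in> Gcar m n.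
      (nat ((x * int i * int k ^ j - y * (int k ^ j - 1)) mod int m), 0))"

definition then_map :: "nat \<Rightarrow> nat \<Rightarrow> (nat \<times> nat \<Rightarrow> nat \<times> nat) \<Rightarrow> (nat \<times> nat \<Rightarrow> nat \<times> nat)
    \<Rightarrow> (nat \<times> nat \<Rightarrow> nat \<times> nat)" where
  "then_map m n f g = compose (Gcar m n) g f"

definition container :: "nat \<Rightarrow> nat \<Rightarrow> nat \<Rightarrow> int \<Rightarrow> int \<Rightarrow> (nat \<times> nat \<Rightarrow> nat \<times> nat) set" where
  "container m n k x y = {mu m n k x ((y * z) mod int m) | z. z \<in> Zm m}"

definition invertibles :: "nat \<Rightarrow> int set \<Rightarrow> int set" where
  "invertibles m S = {s \<in> S. coprime s (int m)}"

definition is_base :: "nat \<Rightarrow> int set \<Rightarrow> bool" where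
  "is_base m S \<longleftrightarrow> S \<subseteq> Zm m \<and> 0 \<in> S \<and> invertibles m S \<noteq> {}"

inductive_set semigen :: "nat \<Rightarrow> int set \<Rightarrow> int set" for m S where
  base: "s \<in> S \<Longrightarrow> s \<in> semigen m S"
| mult: "a \<in> semigen m S \<Longrightarrow> b \<in> semigen m S \<Longrightarrow> (a * b) mod int m \<in> semigen m S"

inductive_set SigmaG :: "nat \<Rightarrow> nat \<Rightarrow> nat \<Rightarrow> int set \<Rightarrow> (nat \<times> nat \<Rightarrow> nat \<times> nat) set"
  for m n k S where
  gen: "s \<in> S \<Longrightarrow> z \<in> Zm m \<Longrightarrow> mu m n k s z \<in> SigmaG m n k S"
| comp: "f \<in> SigmaG m n k S \<Longrightarrow> g \<in> SigmaG m n k S \<Longrightarrow> then_map m n f g \<in> SigmaG m n k S"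

definition Yset :: "nat \<Rightarrow> int set \<Rightarrow> int \<Rightarrow> int set" where
  "Yset m S x = {(s' * z) mod int m | s' z. s' \<in> semigen m S \<and> z \<in> Zm m \<and>
      (\<exists>s \<in> S. [x = s * s'] (mod int m))}"

end

theory Submission
  imports Defs
begin

lemma mu_cong:
  assumes "[x = x'] (mod int m)" "[y = y'] (mod int m)"
  shows "mu m n k x y = mu m n k x' y'"
proof -
  have "\<And>i j. (x * int i * int k ^ j - y * (int k ^ j - 1)) mod int m
      = (x' * int i * int k ^ j - y' * (int k ^ j - 1)) mod int m"
  proof -
    fix i j
    have "[x * int i * int k ^ j - y * (int k ^ j - 1) = x' * int i * int k ^ j - y' * (int k ^ j - 1)] (mod int m)"
      using assms by (intro cong_diff cong_mult cong_refl)
    then show "(x * int i * int k ^ j - y * (int k ^ j - 1)) mod int m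
      = (x' * int i * int k ^ j - y' * (int k ^ j - 1)) mod int m" by (simp add: cong_def)
  qed
  then show ?thesis unfolding mu_def by simp
qed

lemma mu_mod: "mu m n k (x mod int m) (y mod int m) = mu m n k x y"
  by (rule mu_cong) (simp_all add: cong_def)

lemma then_mu:
  assumes "m > 0" "n > 0"
  shows "then_map m n (mu m n k x1 y1) (mu m n k x2 y2) = mu m n k (x1 * x2) (x2 * y1)"
proof -
  have "\<And>i j. (i, j) \<in> Gcar m n \<Longrightarrow>
     mu m n k x2 y2 (mu m n k x1 y1 (i, j)) = mu m n k (x1 * x2) (x2 * y1) (i, j)"
  proof -
    fix i j assume ij: "(i, j) \<in> Gcar m n"
    define N where "N = (x1 * int i * int k ^ j - y1 * (int k ^ j - 1)) mod int m"
    have N0: "0 \<le> N" "N < int m" using assms by (simp_all add: N_def)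
    have "mu m n k x1 y1 (i, j) = (nat N, 0)" using ij by (simp add: mu_def N_def)
    moreover have "(nat N, 0) \<in> Gcar m n" using N0 assms by (auto simp: Gcar_def)
    moreover have "(x2 * N) mod int m = (x1 * x2 * int i * int k ^ j - x2 * y1 * (int k ^ j - 1)) mod int m"
    proof -
      have "(x2 * N) mod int m = (x2 * (x1 * int i * int k ^ j - y1 * (int k ^ j - 1))) mod int m"
        unfolding N_def by (simp add: mod_mult_right_eq)
      also have "x2 * (x1 * int i * int k ^ j - y1 * (int k ^ j - 1)) = x1 * x2 * int i * int k ^ j - x2 * y1 * (int k ^ j - 1)"
        by (simp add: algebra_simps)
      finally show ?thesis .
    qed
    ultimately show "mu m n k x2 y2 (mu m n k x1 y1 (i, j)) = mu m n k (x1 * x2) (x2 * y1) (i, j)"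
      using ij N0 by (simp add: mu_def)
  qed
  note pt = this
  show ?thesis unfolding then_map_def compose_def
  proof (intro ext)
    fix p
    show "(\<lambda>x\<in>Gcar m n. mu m n k x2 y2 (mu m n k x1 y1 x)) p = mu m n k (x1 * x2) (x2 * y1) p"
    proof (cases "p \<in> Gcar m n")
      case True then show ?thesis using pt[of "fst p" "snd p"] by simp
    next
      case False then show ?thesis by (simp add: mu_def)
    qed
  qed
qed

lemma semigen_Zm:
  assumes "m > 0" "S \<subseteq> Zm m" "a \<in> semigen m S" shows "a \<in> Zm m"
  using assms(3) by induction (use assms in \<open>auto simp: Zm_def\<close>)

lemma one_in_semigen:
  assumes "m > 0" "is_base m S"
  shows "1 mod int m \<in> semigen m S"
proof -
  obtain u where u: "u \<in> S" "coprime u (int m)"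
    using assms(2) unfolding is_base_def invertibles_def by auto
  have u0: "0 \<le> u" "u < int m" using u(1) assms(2) by (auto simp: is_base_def Zm_def)
  have pw: "u ^ Suc r mod int m \<in> semigen m S" for r
  proof (induction r)
    case 0
    have "u mod int m = u" using u0 by simp
    then show ?case using u by (simp add: semigen.base)
  next
    case (Suc r)
    have "(u ^ Suc r mod int m * u) mod int m \<in> semigen m S"
      by (rule semigen.mult[OF Suc semigen.base[OF u(1)]])
    moreover have "(u ^ Suc r mod int m * u) mod int m = u ^ Suc (Suc r) mod int m"
      by (metis mod_mult_left_eq mult.commute power_Suc)
    ultimately show ?case by simp
  qed
  have cu: "coprime (nat u) m" using u u0
    by (metis coprime_int_iff int_nat_eq)
  have "[nat u ^ totient m = 1] (mod m)" by (rule euler_theorem[OF cu])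
  then have "[u ^ totient m = 1] (mod int m)" using u0
    by (metis cong_int_iff int_nat_eq of_nat_1 of_nat_power)
  moreover have "totient m > 0" using assms(1) by simp
  ultimately show ?thesis using pw[of "totient m - 1"] by (simp add: cong_def)
qed

lemma mu_semigen_in:
  assumes "m > 0" "n > 0" "is_base m S" "a \<in> semigen m S"
  shows "mu m n k a 0 \<in> SigmaG m n k S"
  using assms(4)
proof induction
  case (base s) then show ?case using assms by (intro SigmaG.gen) (auto simp: Zm_def)
next
  case (mult a b)
  have "then_map m n (mu m n k a 0) (mu m n k b 0) \<in> SigmaG m n k S"
    using mult(3,4) by (rule SigmaG.comp)
  also have "then_map m n (mu m n k a 0) (mu m n k b 0) = mu m n k ((a * b) mod int m) 0"
    using assms by (simp add: then_mu mu_mod[of m n k "a*b" 0, simplified])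
  finally show ?case .
qed

lemma mu_at10:
  assumes "1 < m" "0 < n"
  shows "mu m n k x y (1, 0) = (nat (x mod int m), 0)"
  using assms by (simp add: mu_def Gcar_def)

theorem theorem4p6:
  fixes m n k :: nat and S :: "int set"
  assumes "m > 0" and "n > 0" and "k > 0"
    and "coprime m (k - 1)"
    and "n = ord m k"
    and "is_base m S"
  shows "SigmaG m n k S = (\<Union>x \<in> semigen m S. \<Union>y \<in> Yset m S x. container m n k x y)
    \<and> disjoint_family_on (\<lambda>x. \<Union>y \<in> Yset m S x. container m n k x y) (semigen m S)"
proof (intro conjI)
  note m = assms(1) and nn = assms(2) and B = assms(6)
  have SZ: "S \<subseteq> Zm m" using B by (simp add: is_base_def)
  have one: "1 mod int m \<in> semigen m S" using one_in_semigen[OF m B] .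
  have onez: "1 mod int m \<in> Zm m" using m by (simp add: Zm_def)
  show "SigmaG m n k S = (\<Union>x \<in> semigen m S. \<Union>y \<in> Yset m S x. container m n k x y)"
  proof
    show "SigmaG m n k S \<subseteq> (\<Union>x \<in> semigen m S. \<Union>y \<in> Yset m S x. container m n k x y)"
    proof
      fix f assume "f \<in> SigmaG m n k S"
      then have "\<exists>x s s' t. f = mu m n k x (s' * t) \<and> x \<in> semigen m S \<and> s' \<in> semigen m S
          \<and> s \<in> S \<and> [x = s * s'] (mod int m) \<and> t \<in> Zm m"
      proof induction
        case (gen s z)
        have "mu m n k s z = mu m n k s ((1 mod int m) * z)"
          by (rule mu_cong) (auto simp: cong_def mod_mult_left_eq)
        moreover have "[s = s * (1 mod int m)] (mod int m)"
          by (auto simp: cong_def mod_mult_right_eq)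
        ultimately show ?case using gen one by (blast intro: semigen.base)
      next
        case (comp f g)
        from comp(3) obtain x1 s1 s1' t1 where A: "f = mu m n k x1 (s1' * t1)" "x1 \<in> semigen m S"
          "s1' \<in> semigen m S" "s1 \<in> S" "[x1 = s1 * s1'] (mod int m)" "t1 \<in> Zm m" by blast
        from comp(4) obtain x2 y2 where Bg: "g = mu m n k x2 y2" "x2 \<in> semigen m S" by blast
        have "then_map m n f g = mu m n k (x1 * x2) (x2 * (s1' * t1))"
          using A Bg m nn by (simp add: then_mu)
        also have "\<dots> = mu m n k ((x1 * x2) mod int m) (((s1' * x2) mod int m) * t1)"
        proof (rule mu_cong)
          have "t1 * (s1' * x2 mod int m) mod int m = t1 * (s1' * x2) mod int m"
            by (rule mod_mult_right_eq)
          then show "[x2 * (s1' * t1) = s1' * x2 mod int m * t1] (mod int m)"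
            by (simp add: cong_def algebra_simps)
        qed (simp add: cong_def)
        finally have e: "then_map m n f g = mu m n k ((x1 * x2) mod int m) (((s1' * x2) mod int m) * t1)" .
        have "[(x1 * x2) mod int m = s1 * ((s1' * x2) mod int m)] (mod int m)"
        proof -
          have "[(x1 * x2) mod int m = x1 * x2] (mod int m)" by (simp add: cong_def)
          moreover have "[x1 * x2 = (s1 * s1') * x2] (mod int m)" using A(5) by (intro cong_mult cong_refl)
          moreover have "[(s1 * s1') * x2 = s1 * ((s1' * x2) mod int m)] (mod int m)"
            by (simp add: cong_def mod_mult_right_eq mult.assoc)
          ultimately show ?thesis by (meson cong_trans)
        qed
        then show ?case using e A Bg by (blast intro: semigen.mult)
      qed
      then obtain x s s' t where C: "f = mu m n k x (s' * t)" "x \<in> semigen m S" "s' \<in> semigen m S"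
          "s \<in> S" "[x = s * s'] (mod int m)" "t \<in> Zm m" by blast
      have y: "(s' * t) mod int m \<in> Yset m S x" unfolding Yset_def using C by blast
      have "f = mu m n k x (((s' * t) mod int m * (1 mod int m)) mod int m)"
        unfolding C(1) by (rule mu_cong) (auto simp: cong_def mod_mult_left_eq mod_mult_right_eq)
      then have "f \<in> container m n k x ((s' * t) mod int m)"
        unfolding container_def using onez by blast
      then show "f \<in> (\<Union>x \<in> semigen m S. \<Union>y \<in> Yset m S x. container m n k x y)"
        using C(2) y by blast
    qed
  next
    show "(\<Union>x \<in> semigen m S. \<Union>y \<in> Yset m S x. container m n k x y) \<subseteq> SigmaG m n k S"
    proof clarify
      fix x y f assume x: "x \<in> semigen m S" and y: "y \<in> Yset m S x" and f: "f \<in> container m n k x y"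
      from y obtain s' z0 s where Y: "y = (s' * z0) mod int m" "s' \<in> semigen m S" "z0 \<in> Zm m"
        "s \<in> S" "[x = s * s'] (mod int m)" unfolding Yset_def by blast
      from f obtain z where Z: "f = mu m n k x ((y * z) mod int m)" "z \<in> Zm m"
        unfolding container_def by blast
      have g1: "mu m n k s ((z0 * z) mod int m) \<in> SigmaG m n k S"
        using Y m by (intro SigmaG.gen) (auto simp: Zm_def)
      have g2: "mu m n k s' 0 \<in> SigmaG m n k S" using mu_semigen_in[OF m nn B Y(2)] .
      have "then_map m n (mu m n k s ((z0 * z) mod int m)) (mu m n k s' 0)
          = mu m n k (s * s') (s' * ((z0 * z) mod int m))" using m nn by (simp add: then_mu)
      also have "\<dots> = f" unfolding Z(1) Y(1)
      proof (rule mu_cong)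
        show "[s * s' = x] (mod int m)" using Y(5) by (simp add: cong_sym)
        show "[s' * ((z0 * z) mod int m) = s' * z0 mod int m * z mod int m] (mod int m)"
          by (simp add: cong_def mod_mult_left_eq mod_mult_right_eq mult.assoc)
      qed
      finally show "f \<in> SigmaG m n k S" using SigmaG.comp[OF g1 g2] by simp
    qed
  qed
next
  have SZ: "S \<subseteq> Zm m" using assms(6) by (simp add: is_base_def)
  show "disjoint_family_on (\<lambda>x. \<Union>y \<in> Yset m S x. container m n k x y) (semigen m S)"
    unfolding disjoint_family_on_def
  proof (intro ballI impI)
    fix a b assume a: "a \<in> semigen m S" and b: "b \<in> semigen m S" and ab: "a \<noteq> b"
    have az: "a \<in> Zm m" and bz: "b \<in> Zm m" using semigen_Zm[OF assms(1) SZ] a b by auto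
    then have m1: "1 < m" using ab by (auto simp: Zm_def)
    show "(\<Union>y \<in> Yset m S a. container m n k a y) \<inter> (\<Union>y \<in> Yset m S b. container m n k b y) = {}"
    proof (rule ccontr)
      assume "\<not> ?thesis"
      then obtain f y1 y2 where "f \<in> container m n k a y1" "f \<in> container m n k b y2" by blast
      then obtain z1 z2 where "f = mu m n k a z1" "f = mu m n k b z2"
        unfolding container_def by blast
      then have "mu m n k a z1 (1, 0) = mu m n k b z2 (1, 0)" by simp
      then have "nat (a mod int m) = nat (b mod int m)" using mu_at10[OF m1 assms(2)] by simp
      then show False using az bz ab by (auto simp: Zm_def eq_nat_nat_iff)
    qed
  qed
qed

end
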